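(* Assume (A), (R), (S) and let $c$ be a global solution of (E) with initial condition $c^{\mathrm{in}}\in\ell^1_1$. Then $$\mathfrak m_1(t)=\sum_{k=1}^\infty kc_k(t)\le\max\{\mathfrak m_1^{\mathrm{in}},\widehat{\mathfrak s}_1\}\quad\text{for all }t\ge0.$$ Moreover there exists $T>0$, depending only on $\mathfrak m_1^{\mathrm{in}}$, $\widehat{\mathfrak s}_1$ and $R_*$, such that $\mathfrak m_1(t)\le 2\widehat{\mathfrak s}_1$ for all $t\ge T$.
   Context: Throughout, $\mathbb N=\{1,2,\dots\}$. We consider the forced discrete coagulation equation $$\frac{d}{dt}c_k=\frac12\sum_{\ell=1}^{k-1}a_{k-\ell,\ell}c_{k-\ell}c_\ell-c_k\sum_{\ell=1}^{\infty}a_{k,\ell}c_\ell+s_k-r_kc_k,\qquad k\in\mathbb N,\tag{E}$$ with real coefficients satisfying the standing assumptions: (A) $a_{k,\ell}=a_{\ell,k}$ and $0\le a_{k,\ell}\le A_*(k^\alpha\ell^\beta+k^\beta\ell^\alpha)$ for all $k,\ell\in\mathbb N$, with constants $A_*>0$, $\alpha,\beta\in[0,1]$, $\alpha\le\beta$; (R) $r_k\ge R_*k^\gamma$ for all $k\in\mathbb N$, with $R_*>0$ and $\gamma>\max\{0,\alpha+\beta-1\}$; (S) $s_k\ge 0$ for all $k$, and for every $\mu\ge0$ there is $\mathfrak s_\mu>0$ with $\sum_{k\ge1}k^\mu s_k\le\mathfrak s_\mu$. Write $\widehat A_*=A_*/R_*$ and $\widehat{\mathfrak s}_\mu=\mathfrak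 s_\mu/R_*$. For $\mu\ge0$, $\ell^1_\mu$ is the set of sequences $(c_k)_{k\in\mathbb N}$ with $c_k\in[0,\infty)$ and $\sum_k k^\mu c_k<\infty$. Solution: a sequence $c=(c_k)_{k\in\mathbb N}$ of continuous functions $c_k:[0,T)\to[0,\infty)$ is a solution of (E) on $[0,T)$ with initial condition $c^{\mathrm{in}}\in\ell^1_1$ if (i) for each $k$, (E) holds for all $t\in(0,T)$; (ii) for each $\mu\ge1$, $c\in L^\infty([0,T),\ell^1_1)\cap C^1((0,T),\ell^1_\mu)$; (iii) $c_k(0)=c_k^{\mathrm{in}}$ for all $k$. It is a global solution if $T=\infty$. Moments: $\mathfrak m_\mu(t)=\sum_k k^\mu c_k(t)$, $\mathfrak m_1^{\mathrm{in}}=\sum_k k c_k^{\mathrm{in}}$. *)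

theory Defs
  imports Complex_Main
begin

text \<open>Sequences indexed by the positive integers are modelled as functions
  nat => real; the value at index 0 is ignored everywhere (note that
  0 powr mu = 0 in Isabelle, so index 0 never contributes to a weighted sum).\<close>

definition wsum :: "real \<Rightarrow> (nat \<Rightarrow> real) \<Rightarrow> real" where
  "wsum \<mu> x = (\<Sum>k. real k powr \<mu> * x k)"

abbreviation moment :: "real \<Rightarrow> (nat \<Rightarrow> real) \<Rightarrow> real" where
  "moment \<mu> x \<equiv> wsum \<mu> x"

definition in_l1 :: "real \<Rightarrow> (nat \<Rightarrow> real) \<Rightarrow> bool" where
  "in_l1 \<mu> x \<longleftrightarrow> (\<forall>k\<ge>1. x k \<ge> 0) \<and> summable (\<lambda>k. real k powr \<mu> * x k)"

definition l1norm :: "real \<Rightarrow> (nat \<Rightarrow> real) \<Rightarrow> real" where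
  "l1norm \<mu> x = (\<Sum>k. real k powr \<mu> * \<bar>x k\<bar>)"

definition l1fin :: "real \<Rightarrow> (nat \<Rightarrow> real) \<Rightarrow> bool" where
  "l1fin \<mu> x \<longleftrightarrow> summable (\<lambda>k. real k powr \<mu> * \<bar>x k\<bar>)"

text \<open>Standing assumptions (A), (R), (S). The constants frak_s mu are given by fs.\<close>
definition standing_assms ::
  "real \<Rightarrow> real \<Rightarrow> real \<Rightarrow> real \<Rightarrow> real \<Rightarrow> (nat \<Rightarrow> nat \<Rightarrow> real) \<Rightarrow>
   (nat \<Rightarrow> real) \<Rightarrow> (nat \<Rightarrow> real) \<Rightarrow> (real \<Rightarrow> real) \<Rightarrow> bool" where
  "standing_assms Astar \<alpha> \<beta> \<gamma> Rstar a r s fs \<longleftrightarrow>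
     Astar > 0 \<and> 0 \<le> \<alpha> \<and> \<alpha> \<le> \<beta> \<and> \<beta> \<le> 1 \<and>
     (\<forall>k\<ge>1. \<forall>l\<ge>1. a k l = a l k \<and> 0 \<le> a k l \<and>
        a k l \<le> Astar * (real k powr \<alpha> * real l powr \<beta> + real k powr \<beta> * real l powr \<alpha>)) \<and>
     Rstar > 0 \<and> \<gamma> > max 0 (\<alpha> + \<beta> - 1) \<and>
     (\<forall>k\<ge>1. r k \<ge> Rstar * real k powr \<gamma>) \<and>
     (\<forall>k\<ge>1. s k \<ge> 0) \<and>
     (\<forall>\<mu>\<ge>0. fs \<mu> > 0 \<and> summable (\<lambda>k. real k powr \<mu> * s k) \<and> wsum \<mu> s \<le> fs \<mu>)"

definition coag_rhs ::
  "(nat \<Rightarrow> nat \<Rightarrow> real) \<Rightarrow> (nat \<Rightarrow> real) \<Rightarrow> (nat \<Rightarrow> real) \<Rightarrow> (nat \<Rightarrow> real) \<Rightarrow> nat \<Rightarrow> real" where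
  "coag_rhs a r s x k =
     (1/2) * (\<Sum>l=1..k-1. a (k-l) l * x (k-l) * x l)
     - x k * (\<Sum>l. a k (Suc l) * x (Suc l)) + s k - r k * x k"

definition global_solution ::
  "(nat \<Rightarrow> nat \<Rightarrow> real) \<Rightarrow> (nat \<Rightarrow> real) \<Rightarrow> (nat \<Rightarrow> real) \<Rightarrow> (nat \<Rightarrow> real) \<Rightarrow>
   (real \<Rightarrow> nat \<Rightarrow> real) \<Rightarrow> bool" where
  "global_solution a r s cin c \<longleftrightarrow>
     in_l1 1 cin \<and>
     \<comment> \<open>continuous nonnegative components on [0,infinity)\<close>
     (\<forall>k\<ge>1. continuous_on {0..} (\<lambda>t. c t k) \<and> (\<forall>t\<ge>0. c t k \<ge> 0)) \<and>
     \<comment> \<open>(i) the equation holds for t > 0\<close>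
     (\<forall>k\<ge>1. \<forall>t>0. ((\<lambda>\<tau>. c \<tau> k) has_real_derivative coag_rhs a r s (c t) k) (at t)) \<and>
     \<comment> \<open>(ii) L-infinity([0,infinity), l^1_1)\<close>
     (\<exists>B. \<forall>t\<ge>0. in_l1 1 (c t) \<and> wsum 1 (c t) \<le> B) \<and>
     \<comment> \<open>(ii) C^1((0,infinity), l^1_mu) for every mu >= 1\<close>
     (\<forall>\<mu>\<ge>1. (\<forall>t>0. in_l1 \<mu> (c t)) \<and>
        (\<exists>c'. (\<forall>t>0. l1fin \<mu> (c' t)) \<and>
           (\<forall>t>0. ((\<lambda>h. l1norm \<mu> (\<lambda>k. (c (t+h) k - c t k) / h - c' t k)) \<longlongrightarrow> 0) (at 0)) \<and>
           (\<forall>t>0. ((\<lambda>\<tau>. l1norm \<mu> (\<lambda>k. c' \<tau> k - c' t k)) \<longlongrightarrow> 0) (at t)))) \<and>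
     \<comment> \<open>(iii) initial condition\<close>
     (\<forall>k\<ge>1. c 0 k = cin k)"

end

theory Submission imports Defs begin

lemma ode_bound:
  fixes f :: "real \<Rightarrow> real" and R S t :: real
  assumes R: "R > 0" and cont: "continuous_on {0..} f"
    and der: "\<And>\<tau>. \<tau> > 0 \<Longrightarrow> \<exists>y. (f has_real_derivative y) (at \<tau>) \<and> y \<le> S - R * f \<tau>"
    and t: "t \<ge> 0"
  shows "f t \<le> S/R + (f 0 - S/R) * exp (-(R*t))"
proof -
  define g where "g \<tau> = exp (R*\<tau>) * (f \<tau> - S/R)" for \<tau>
  have "g t \<le> g 0"
  proof (rule DERIV_nonpos_imp_decreasing_open[OF t])
    fix \<tau> assume "0 < \<tau>" "\<tau> < t"
    then obtain y where y: "(f has_real_derivative y) (at \<tau>)" "y \<le> S - R * f \<tau>" using der by blast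
    have "(g has_real_derivative (R * exp (R*\<tau>) * (f \<tau> - S/R) + exp (R*\<tau>) * y)) (at \<tau>)"
      unfolding g_def by (auto intro!: derivative_eq_intros y(1))
    moreover have "R * exp (R*\<tau>) * (f \<tau> - S/R) + exp (R*\<tau>) * y \<le> 0"
    proof -
      have "R * exp (R*\<tau>) * (f \<tau> - S/R) + exp (R*\<tau>) * y = exp (R*\<tau>) * (y + R * f \<tau> - S)"
        using R by (simp add: field_simps)
      also have "\<dots> \<le> 0" using y(2) by (intro mult_nonneg_nonpos) auto
      finally show ?thesis .
    qed
    ultimately show "\<exists>y. (g has_real_derivative y) (at \<tau>) \<and> y \<le> 0" by blast
  next
    show "continuous_on {0..t} g" unfolding g_def
      by (intro continuous_intros continuous_on_subset[OF cont]) auto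
  qed
  hence "exp (R*t) * (f t - S/R) \<le> f 0 - S/R" by (simp add: g_def)
  hence "f t - S/R \<le> (f 0 - S/R) / exp (R*t)"
    by (simp add: pos_le_divide_eq mult.commute)
  thus ?thesis by (simp add: exp_minus divide_inverse)
qed

lemma gain_le:
  fixes g :: "nat \<Rightarrow> nat \<Rightarrow> real"
  assumes nn: "\<And>i j. 1 \<le> i \<Longrightarrow> 1 \<le> j \<Longrightarrow> 0 \<le> g i j"
    and sym: "\<And>i j. 1 \<le> i \<Longrightarrow> 1 \<le> j \<Longrightarrow> g i j = g j i"
  shows "(\<Sum>k\<in>{1..<n}. real k * (\<Sum>l=1..k-1. g (k-l) l))
     \<le> 2 * (\<Sum>i\<in>{1..<n}. \<Sum>j\<in>{1..<n}. real i * g i j)"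
proof -
  define T where "T = {(i,j). 1 \<le> i \<and> 1 \<le> j \<and> i + j < n}"
  have "(\<Sum>k\<in>{1..<n}. real k * (\<Sum>l=1..k-1. g (k-l) l))
      = (\<Sum>k\<in>{1..<n}. \<Sum>l\<in>{1..k-1}. real k * g (k-l) l)"
    by (simp add: sum_distrib_left)
  also have "\<dots> = (\<Sum>(k,l)\<in>Sigma {1..<n} (\<lambda>k. {1..k-1}). real k * g (k-l) l)"
    by (rule sum.Sigma) auto
  also have "\<dots> = (\<Sum>(i,j)\<in>T. real (i+j) * g i j)"
    by (rule sum.reindex_bij_witness[where i="\<lambda>(i,j). (i+j, j)" and j="\<lambda>(k,l). (k-l, l)"])
       (auto simp: T_def)
  also have "\<dots> \<le> (\<Sum>(i,j)\<in>{1..<n}\<times>{1..<n}. real (i+j) * g i j)"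
    by (rule sum_mono2) (auto simp: T_def intro!: mult_nonneg_nonneg nn)
  also have "\<dots> = (\<Sum>(i,j)\<in>{1..<n}\<times>{1..<n}. real i * g i j) + (\<Sum>(i,j)\<in>{1..<n}\<times>{1..<n}. real j * g i j)"
    by (simp add: sum.distrib[symmetric] case_prod_beta algebra_simps)
  also have "(\<Sum>(i,j)\<in>{1..<n}\<times>{1..<n}. real j * g i j) = (\<Sum>(i,j)\<in>{1..<n}\<times>{1..<n}. real i * g i j)"
    by (rule sum.reindex_bij_witness[where i="\<lambda>(i,j). (j,i)" and j="\<lambda>(i,j). (j,i)"]) (auto simp: sym)
  also have "(\<Sum>(i,j)\<in>{1..<n}\<times>{1..<n}. real i * g i j) = (\<Sum>i\<in>{1..<n}. \<Sum>j\<in>{1..<n}. real i * g i j)"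
    by (simp add: sum.cartesian_product)
  finally show ?thesis by simp
qed

lemma shift_sum: "(\<Sum>j\<in>{1..<n}. h j) = (\<Sum>l\<in>{..<n-1}. h (Suc l) :: real)"
proof (cases n)
  case 0 then show ?thesis by simp
next
  case (Suc m)
  then show ?thesis using sum.shift_bounds_Suc_ivl[of h 0 m] by (simp add: atLeast0LessThan)
qed

lemma sum_drop0: "(\<Sum>k\<in>{..<n}. real k powr 1 * x k) = (\<Sum>k\<in>{1..<n}. real k * x k)"
proof -
  have "(\<Sum>k\<in>{..<n}. real k powr 1 * x k) = (\<Sum>k\<in>{0..<n}. real k * x k)"
    by (simp add: atLeast0LessThan)
  also have "\<dots> = (\<Sum>k\<in>{Suc 0..<n}. real k * x k)"
    by (rule sum_shift_lb_Suc0_0_upt[symmetric]) simp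
  finally show ?thesis by simp
qed

lemma core:
  assumes SA: "standing_assms Astar \<alpha> \<beta> \<gamma> Rstar a r s fs"
    and GS: "global_solution a r s cin c" and t: "t \<ge> 0"
  shows "moment 1 (c t) \<le> fs 1 / Rstar + max 0 (moment 1 cin - fs 1 / Rstar) * exp (-(Rstar*t))"
proof -
  from SA have A: "Astar > 0" and al: "\<alpha> \<le> 1" "\<beta> \<le> 1"
    and aK: "\<And>k l. k \<ge> 1 \<Longrightarrow> l \<ge> 1 \<Longrightarrow> a k l = a l k \<and> 0 \<le> a k l \<and>
        a k l \<le> Astar * (real k powr \<alpha> * real l powr \<beta> + real k powr \<beta> * real l powr \<alpha>)"
    and R: "Rstar > 0" and gam: "\<gamma> > 0"
    and rK: "\<And>k. k \<ge> 1 \<Longrightarrow> r k \<ge> Rstar * real k powr \<gamma>"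
    and sK: "\<And>k. k \<ge> 1 \<Longrightarrow> s k \<ge> 0"
    unfolding standing_assms_def by auto
  from SA have "\<forall>\<mu>\<ge>0. fs \<mu> > 0 \<and> summable (\<lambda>k. real k powr \<mu> * s k) \<and> wsum \<mu> s \<le> fs \<mu>"
    unfolding standing_assms_def by blast
  hence fs1: "summable (\<lambda>k. real k powr 1 * s k)" "wsum 1 s \<le> fs 1"
    by (metis zero_le_one)+
  from GS have cin: "in_l1 1 cin" and cont: "\<And>k. k \<ge> 1 \<Longrightarrow> continuous_on {0..} (\<lambda>t. c t k)"
    and cnn: "\<And>k \<tau>. k \<ge> 1 \<Longrightarrow> \<tau> \<ge> 0 \<Longrightarrow> c \<tau> k \<ge> 0"
    and der: "\<And>k \<tau>. k \<ge> 1 \<Longrightarrow> \<tau> > 0 \<Longrightarrow> ((\<lambda>\<sigma>. c \<sigma> k) has_real_derivative coag_rhs a r s (c \<tau>) k) (at \<tau>)"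
    and c0: "\<And>k. k \<ge> 1 \<Longrightarrow> c 0 k = cin k"
    unfolding global_solution_def by blast+
  from GS obtain B where l1: "\<And>\<tau>. \<tau> \<ge> 0 \<Longrightarrow> in_l1 1 (c \<tau>)"
    unfolding global_solution_def by blast
  have pk: "x powr e \<le> x" if "1 \<le> x" "e \<le> 1" for x e :: real
    using powr_mono[of e 1 x] that by simp
  have sumc: "summable (\<lambda>k. real k * c \<tau> k)" if "\<tau> \<ge> 0" for \<tau>
    using l1[OF that] by (simp add: in_l1_def)
  have Lsum: "summable (\<lambda>l. a k (Suc l) * c \<tau> (Suc l))" if k: "k \<ge> 1" and tau: "\<tau> \<ge> 0" for k \<tau>
  proof (rule summable_comparison_test')
    show "summable (\<lambda>l. 2*Astar*real k * (real (Suc l) * c \<tau> (Suc l)))"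
      using sumc[OF tau] by (intro summable_mult) (rule summable_Suc_iff[where f="\<lambda>k. real k * c \<tau> k", THEN iffD2])
    fix l :: nat
    have ka: "real k powr \<alpha> \<le> real k" "real k powr \<beta> \<le> real k"
      "real (Suc l) powr \<alpha> \<le> real (Suc l)" "real (Suc l) powr \<beta> \<le> real (Suc l)"
      using pk al k by auto
    have "a k (Suc l) \<le> Astar * (real k powr \<alpha> * real (Suc l) powr \<beta> + real k powr \<beta> * real (Suc l) powr \<alpha>)"
      using aK[OF k, of "Suc l"] by simp
    also have "\<dots> \<le> Astar * (real k * real (Suc l) + real k * real (Suc l))"
      using A ka by (intro mult_left_mono add_mono mult_mono) auto
    finally have "a k (Suc l) \<le> 2*Astar*real k * real (Suc l)" by simp
    moreover have "0 \<le> a k (Suc l)" "0 \<le> c \<tau> (Suc l)" using aK[OF k, of "Suc l"] cnn[OF _ tau, of "Suc l"] by auto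
    ultimately show "norm (a k (Suc l) * c \<tau> (Suc l)) \<le> 2*Astar*real k * (real (Suc l) * c \<tau> (Suc l))"
      using mult_right_mono[of "a k (Suc l)" "2*Astar*real k * real (Suc l)" "c \<tau> (Suc l)"]
      by (simp add: mult.assoc)
  qed
  define sh where "sh = fs 1 / Rstar"
  define m where "m = moment 1 cin"
  show ?thesis
    unfolding wsum_def[of 1 "c t"]
  proof (rule suminf_le_const)
    show "summable (\<lambda>k. real k powr 1 * c t k)" using sumc[OF t] by simp
    fix n
    define M where "M \<tau> = (\<Sum>k\<in>{1..<n}. real k * c \<tau> k)" for \<tau>
    have "M t \<le> fs 1 / Rstar + (M 0 - fs 1/Rstar) * exp (-(Rstar*t))"
    proof (rule ode_bound[OF R _ _ t])
      show "continuous_on {0..} M" unfolding M_def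
        by (intro continuous_on_sum continuous_on_mult continuous_on_const cont) auto
      fix \<tau> :: real assume \<tau>: "\<tau> > 0"
      define x where "x = c \<tau>"
      have xnn: "\<And>k. k \<ge> 1 \<Longrightarrow> x k \<ge> 0" using cnn \<tau> by (simp add: x_def)
      define D where "D = (\<Sum>k\<in>{1..<n}. real k * coag_rhs a r s x k)"
      have "(M has_real_derivative D) (at \<tau>)" unfolding M_def D_def x_def
        by (intro DERIV_sum DERIV_cmult der) (auto simp: \<tau>)
      moreover have "D \<le> fs 1 - Rstar * M \<tau>"
      proof -
        define G where "G k = (\<Sum>l=1..k-1. a (k-l) l * x (k-l) * x l)" for k
        define L where "L k = (\<Sum>l. a k (Suc l) * x (Suc l))" for k
        have "D = (\<Sum>k\<in>{1..<n}. real k * (1/2 * G k) - real k * (x k * L k) + real k * s k - real k * (r k * x k))"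
          unfolding D_def coag_rhs_def G_def L_def by (intro sum.cong) (simp_all add: algebra_simps)
        hence Dsplit: "D = (\<Sum>k\<in>{1..<n}. real k * (1/2 * G k)) - (\<Sum>k\<in>{1..<n}. real k * (x k * L k))
           + (\<Sum>k\<in>{1..<n}. real k * s k) - (\<Sum>k\<in>{1..<n}. real k * (r k * x k))"
          by (simp add: sum_subtractf sum.distrib)
        have Lp: "(\<Sum>j\<in>{1..<n}. a i j * x j) \<le> L i" if i: "i \<ge> 1" for i
        proof -
          have "(\<Sum>j\<in>{1..<n}. a i j * x j) = (\<Sum>l\<in>{..<n-1}. a i (Suc l) * x (Suc l))"
            by (rule shift_sum)
          also have "\<dots> \<le> L i" unfolding L_def x_def
          proof (intro sum_le_suminf Lsum[OF i])
            fix l :: nat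
            have "0 \<le> a i (Suc l)" using aK[OF i, of "Suc l"] by simp
            thus "0 \<le> a i (Suc l) * c \<tau> (Suc l)" using cnn[of "Suc l" \<tau>] \<tau> by simp
          qed (use \<tau> in auto)
          finally show ?thesis .
        qed
        have gain: "(\<Sum>k\<in>{1..<n}. real k * (1/2 * G k)) \<le> (\<Sum>k\<in>{1..<n}. real k * (x k * L k))"
        proof -
          have "(\<Sum>k\<in>{1..<n}. real k * (1/2 * G k)) = 1/2 * (\<Sum>k\<in>{1..<n}. real k * G k)"
            by (simp add: sum_distrib_left algebra_simps)
          also have "\<dots> \<le> 1/2 * (2 * (\<Sum>i\<in>{1..<n}. \<Sum>j\<in>{1..<n}. real i * (a i j * x i * x j)))"
            unfolding G_def
            by (intro mult_left_mono gain_le) (auto simp: xnn aK intro!: mult_nonneg_nonneg)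
          also have "\<dots> = (\<Sum>i\<in>{1..<n}. real i * x i * (\<Sum>j\<in>{1..<n}. a i j * x j))"
            by (simp add: sum_distrib_left algebra_simps)
          also have "\<dots> \<le> (\<Sum>i\<in>{1..<n}. real i * x i * L i)"
            by (intro sum_mono mult_left_mono Lp) (auto simp: xnn)
          finally show ?thesis by (simp add: algebra_simps)
        qed
        have src: "(\<Sum>k\<in>{1..<n}. real k * s k) \<le> fs 1"
        proof -
          have "(\<Sum>k\<in>{1..<n}. real k powr 1 * s k) \<le> wsum 1 s"
          proof -
            have "0 \<le> real k * s k" for k using sK[of k] by (cases "k = 0") auto
            thus ?thesis unfolding wsum_def by (intro sum_le_suminf fs1(1)) auto
          qed
          then show ?thesis using fs1(2) by simp
        qed
        have rem: "Rstar * M \<tau> \<le> (\<Sum>k\<in>{1..<n}. real k * (r k * x k))"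
        proof -
          have "Rstar * M \<tau> = (\<Sum>k\<in>{1..<n}. Rstar * (real k * x k))"
            by (simp add: M_def x_def sum_distrib_left)
          also have "\<dots> \<le> (\<Sum>k\<in>{1..<n}. real k * (r k * x k))"
          proof (rule sum_mono)
            fix k assume "k \<in> {1..<n}"
            hence k: "k \<ge> 1" by simp
            have "1 \<le> real k powr \<gamma>" using k gam by (intro ge_one_powr_ge_zero) auto
            hence "Rstar \<le> r k" using rK[OF k] R
              by (smt (verit) mult_le_cancel_left1)
            thus "Rstar * (real k * x k) \<le> real k * (r k * x k)"
              using xnn[OF k] mult_right_mono[of Rstar "r k" "real k * x k"]
              by (simp add: algebra_simps)
          qed
          finally show ?thesis .
        qed
        show ?thesis using Dsplit gain src rem by linarith
      qed
      ultimately show "\<exists>y. (M has_real_derivative y) (at \<tau>) \<and> y \<le> fs 1 - Rstar * M \<tau>" by blast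
    qed
    moreover have "M 0 \<le> m"
    proof -
      have "M 0 = (\<Sum>k\<in>{1..<n}. real k powr 1 * cin k)" unfolding M_def by (intro sum.cong) (auto simp: c0)
      also have "\<dots> \<le> m"
      proof -
        have "0 \<le> real k * cin k" for k using cin unfolding in_l1_def by (cases "k = 0") auto
        thus ?thesis unfolding m_def wsum_def using cin unfolding in_l1_def
          by (intro sum_le_suminf) auto
      qed
      finally show ?thesis .
    qed
    ultimately have "M t \<le> fs 1 / Rstar + max 0 (m - fs 1 / Rstar) * exp (-(Rstar*t))"
      by (smt (verit) exp_gt_zero mult_right_mono)
    thus "(\<Sum>k<n. real k powr 1 * c t k) \<le> fs 1 / Rstar + max 0 (moment 1 cin - fs 1 / Rstar) * exp (-(Rstar*t))"
      using sum_drop0[of "c t" n] unfolding M_def m_def by simp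
  qed
qed

theorem mainTheorem5:
  shows "(\<forall>(Astar::real) (\<alpha>::real) (\<beta>::real) (\<gamma>::real) (Rstar::real)
            (a::nat \<Rightarrow> nat \<Rightarrow> real) (r::nat \<Rightarrow> real) (s::nat \<Rightarrow> real) (fs::real \<Rightarrow> real)
            (cin::nat \<Rightarrow> real) (c::real \<Rightarrow> nat \<Rightarrow> real) (t::real).
            standing_assms Astar \<alpha> \<beta> \<gamma> Rstar a r s fs \<and> global_solution a r s cin c \<and> t \<ge> 0
            \<longrightarrow> moment 1 (c t) \<le> max (moment 1 cin) (fs 1 / Rstar))
       \<and> (\<exists>Tf :: real \<Rightarrow> real \<Rightarrow> real \<Rightarrow> real.
            \<forall>(Astar::real) (\<alpha>::real) (\<beta>::real) (\<gamma>::real) (Rstar::real)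
            (a::nat \<Rightarrow> nat \<Rightarrow> real) (r::nat \<Rightarrow> real) (s::nat \<Rightarrow> real) (fs::real \<Rightarrow> real)
            (cin::nat \<Rightarrow> real) (c::real \<Rightarrow> nat \<Rightarrow> real).
            standing_assms Astar \<alpha> \<beta> \<gamma> Rstar a r s fs \<and> global_solution a r s cin c
            \<longrightarrow> Tf (moment 1 cin) (fs 1 / Rstar) Rstar > 0 \<and>
                (\<forall>t \<ge> Tf (moment 1 cin) (fs 1 / Rstar) Rstar.
                   moment 1 (c t) \<le> 2 * (fs 1 / Rstar)))"
proof (intro conjI allI impI)
  fix Astar \<alpha> \<beta> \<gamma> Rstar a r s fs cin c and t :: real
  assume H: "standing_assms Astar \<alpha> \<beta> \<gamma> Rstar a r s fs \<and> global_solution a r s cin c \<and> t \<ge> 0"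
  hence R: "Rstar > 0" unfolding standing_assms_def by auto
  have "exp (-(Rstar*t)) \<le> 1" using R H by simp
  moreover have "moment 1 (c t) \<le> fs 1 / Rstar + max 0 (moment 1 cin - fs 1 / Rstar) * exp (-(Rstar*t))"
    using core H by blast
  ultimately show "moment 1 (c t) \<le> max (moment 1 cin) (fs 1 / Rstar)"
    by (smt (verit) mult_left_le)
next
  show "\<exists>Tf :: real \<Rightarrow> real \<Rightarrow> real \<Rightarrow> real.
            \<forall>(Astar::real) (\<alpha>::real) (\<beta>::real) (\<gamma>::real) (Rstar::real)
            (a::nat \<Rightarrow> nat \<Rightarrow> real) (r::nat \<Rightarrow> real) (s::nat \<Rightarrow> real) (fs::real \<Rightarrow> real)
            (cin::nat \<Rightarrow> real) (c::real \<Rightarrow> nat \<Rightarrow> real).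
            standing_assms Astar \<alpha> \<beta> \<gamma> Rstar a r s fs \<and> global_solution a r s cin c
            \<longrightarrow> Tf (moment 1 cin) (fs 1 / Rstar) Rstar > 0 \<and>
                (\<forall>t \<ge> Tf (moment 1 cin) (fs 1 / Rstar) Rstar.
                   moment 1 (c t) \<le> 2 * (fs 1 / Rstar))"
  proof (rule exI[where x="\<lambda>m sh R. max 1 (ln (m / sh) / R)"], intro allI impI conjI)
    fix Astar \<alpha> \<beta> \<gamma> Rstar a r s fs cin c
    assume H: "standing_assms Astar \<alpha> \<beta> \<gamma> Rstar a r s fs \<and> global_solution a r s cin c"
    show "(\<lambda>m sh R. max 1 (ln (m / sh) / R)) (moment 1 cin) (fs 1 / Rstar) Rstar > 0" by simp
    have R: "Rstar > 0" and fpos: "fs 1 > 0" using H unfolding standing_assms_def by auto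
    define sh where "sh = fs 1 / Rstar"
    define m where "m = moment 1 cin"
    have sh: "sh > 0" using R fpos by (simp add: sh_def)
      fix t assume T: "t \<ge> (\<lambda>m sh R. max 1 (ln (m / sh) / R)) (moment 1 cin) (fs 1 / Rstar) Rstar"
      hence t1: "t \<ge> 1" and tl: "t \<ge> ln (m/sh) / Rstar" by (auto simp: m_def sh_def)
      have core': "moment 1 (c t) \<le> sh + max 0 (m - sh) * exp (-(Rstar*t))"
        using core[of Astar \<alpha> \<beta> \<gamma> Rstar a r s fs cin c t] H t1 unfolding sh_def m_def by auto
      have "max 0 (m - sh) * exp (-(Rstar*t)) \<le> sh"
      proof (cases "m \<le> sh")
        case True then show ?thesis using sh by simp
      next
        case False
        hence mpos: "m > 0" using sh by simp
        have "Rstar * t \<ge> ln (m/sh)" using tl R by (simp add: pos_divide_le_eq mult.commute)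
        hence "exp (-(Rstar*t)) \<le> exp (- ln (m/sh))" by simp
        also have "\<dots> = sh / m" using mpos sh by (simp add: exp_minus)
        finally have e: "exp (-(Rstar*t)) \<le> sh / m" .
        have "max 0 (m - sh) * exp (-(Rstar*t)) \<le> (m - sh) * (sh / m)"
          using False e by (intro mult_mono) auto
        also have "\<dots> \<le> sh" using mpos sh False by (simp add: field_simps)
        finally show ?thesis .
      qed
      thus "moment 1 (c t) \<le> 2 * (fs 1 / Rstar)" using core' unfolding sh_def by simp
  qed
qed

end
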